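(* Let $k\geq 2$ be an integer and let $G$ be an $(\infty,k)$-path forcer with tip vertex $w$. Then $G$ has an $(\infty,k)$-bounded linear forest decomposition, and every $(\infty,k)$-bounded linear forest decomposition $(F_\infty,F_k)$ of $G$ satisfies $d_{F_\infty}(w)=0$ and $w$ is the last vertex of a path of length $k-1$ in $F_k$ (namely, all edges of the path $P$ belong to $F_k$).
   Context: All graphs are loopless but may have parallel edges. A linear forest is a graph each of whose components is a path; it is $k$-bounded if each component has at most $k$ edges, and $\infty$-bounded means any linear forest. An $(\infty,k)$-bounded linear forest decomposition of $G$ is a pair $(F_\infty,F_k)$ of spanning subgraphs whose edge sets partition $E(G)$, with $F_\infty$ a linear forest and $F_k$ a $k$-bounded linear forest. For integers $K>L\geq 2$, a short $(K,L)$-forcer is obtained from a path $v_0v_1\dots v_K$ by doubling every edge $v_iv_{i+1}$, $0\le i\le K-1$, except those with $i = K-1-\mu(L+1)$ for some integer $\mu\in\{0,\ldots,\lfloor (K-1)/(L+1)\rfloor\}$; $v_K$ is its tip vertex. An $(\infty,k)$-path forcer is obtained from a path $P=p_0p_1\dots p_{k-1}$ of length $k-1$ by identifying each of the vertices $p_0,\dots,p_{k-2}$ with the tip vertices of two new disjoint short $(k+1,k)$-forcers; its tip vertex is $w=p_{k-1}$, the unique vertex of degree $1$. *)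

theory Defs
  imports Main
begin

text \<open>A (loopless, possibly multi-) graph is given by a vertex set V, an edge set E
(edge identifiers, so parallel edges are distinct identifiers) and an endpoint map
ends, with ends e a two-element subset of V.  A spanning subgraph is given by a
subset F of E.\<close>

definition adj_in :: "('e \<Rightarrow> 'v set) \<Rightarrow> 'e set \<Rightarrow> 'v \<Rightarrow> 'v \<Rightarrow> bool" where
  "adj_in ends F u v \<longleftrightarrow> (\<exists>e\<in>F. ends e = {u, v})"

definition comp_in :: "('e \<Rightarrow> 'v set) \<Rightarrow> 'e set \<Rightarrow> 'v \<Rightarrow> 'v set" where
  "comp_in ends F v = {u. (adj_in ends F)\<^sup>*\<^sup>* v u}"

definition is_path_on :: "('e \<Rightarrow> 'v set) \<Rightarrow> 'e set \<Rightarrow> 'v set \<Rightarrow> 'v list \<Rightarrow> 'e list \<Rightarrow> bool" where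
  "is_path_on ends F C vs es \<longleftrightarrow>
     set vs = C \<and> distinct vs \<and> distinct es \<and>
     set es = {e \<in> F. ends e \<subseteq> C} \<and>
     length vs = Suc (length es) \<and>
     (\<forall>i < length es. ends (es ! i) = {vs ! i, vs ! Suc i})"

definition linear_forest :: "'v set \<Rightarrow> 'e set \<Rightarrow> ('e \<Rightarrow> 'v set) \<Rightarrow> 'e set \<Rightarrow> bool" where
  "linear_forest V E ends F \<longleftrightarrow> F \<subseteq> E \<and>
     (\<forall>v\<in>V. \<exists>vs es. is_path_on ends F (comp_in ends F v) vs es)"

definition bounded_linear_forest :: "nat \<Rightarrow> 'v set \<Rightarrow> 'e set \<Rightarrow> ('e \<Rightarrow> 'v set) \<Rightarrow> 'e set \<Rightarrow> bool" where
  "bounded_linear_forest k V E ends F \<longleftrightarrow> F \<subseteq> E \<and>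
     (\<forall>v\<in>V. \<exists>vs es. is_path_on ends F (comp_in ends F v) vs es \<and> length es \<le> k)"

definition inf_k_decomp :: "nat \<Rightarrow> 'v set \<Rightarrow> 'e set \<Rightarrow> ('e \<Rightarrow> 'v set) \<Rightarrow> 'e set \<Rightarrow> 'e set \<Rightarrow> bool" where
  "inf_k_decomp k V E ends Finf Fk \<longleftrightarrow>
     Finf \<union> Fk = E \<and> Finf \<inter> Fk = {} \<and>
     linear_forest V E ends Finf \<and> bounded_linear_forest k V E ends Fk"

definition degree_in :: "('e \<Rightarrow> 'v set) \<Rightarrow> 'e set \<Rightarrow> 'v \<Rightarrow> nat" where
  "degree_in ends F v = card {e \<in> F. v \<in> ends e}"

text \<open>In a short (K,L)-forcer the edge v_i v_(i+1) (i < K) is single (not doubled)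
iff i = K-1-mu(L+1) for some mu in {0..(K-1) div (L+1)}.\<close>
definition sf_single :: "nat \<Rightarrow> nat \<Rightarrow> nat \<Rightarrow> bool" where
  "sf_single K L i \<longleftrightarrow> (\<exists>\<mu>\<le>(K - 1) div (L + 1). i = K - 1 - \<mu> * (L + 1))"

text \<open>PV j is p_j (j<k).  For j < k-1 and
c :: bool (which of the two copies), FV j c i is vertex v_i (i < k+1) of a short
(k+1,k)-forcer whose tip v_(k+1) is identified with PV j.\<close>
datatype pf_vert = PV nat | FV nat bool nat

text \<open>PE j is the edge p_j p_(j+1); FE j c i m is copy m of edge v_i v_(i+1) of the
forcer (j,c); copy True exists only for doubled edges.\<close>
datatype pf_edge = PE nat | FE nat bool nat bool

definition pf_fvert :: "nat \<Rightarrow> nat \<Rightarrow> bool \<Rightarrow> nat \<Rightarrow> pf_vert" where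
  "pf_fvert k j c i = (if i = k + 1 then PV j else FV j c i)"

definition pf_V :: "nat \<Rightarrow> pf_vert set" where
  "pf_V k = {PV j | j. j < k} \<union> {FV j c i | j c i. j < k - 1 \<and> i < k + 1}"

definition pf_E :: "nat \<Rightarrow> pf_edge set" where
  "pf_E k = {PE j | j. j < k - 1} \<union>
     {FE j c i m | j c i m. j < k - 1 \<and> i < k + 1 \<and> (m \<longrightarrow> \<not> sf_single (k + 1) k i)}"

fun pf_ends :: "nat \<Rightarrow> pf_edge \<Rightarrow> pf_vert set" where
  "pf_ends k (PE j) = {PV j, PV (Suc j)}"
| "pf_ends k (FE j c i m) = {pf_fvert k j c i, pf_fvert k j c (Suc i)}"

definition pf_tip :: "nat \<Rightarrow> pf_vert" where
  "pf_tip k = PV (k - 1)"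

end

theory Submission
  imports Defs
begin


lemma comp_in_refl: "v \<in> comp_in ends F v" by (simp add: comp_in_def)

lemma comp_in_step: "e \<in> F \<Longrightarrow> ends e = {a,b} \<Longrightarrow> a \<in> comp_in ends F v \<Longrightarrow> b \<in> comp_in ends F v"
  unfolding comp_in_def adj_in_def
  by (auto intro: rtranclp.rtrancl_into_rtrancl)

lemma comp_in_path:
  assumes dv: "distinct vs" and de: "distinct es" and len: "length vs = Suc (length es)"
  and cons: "\<forall>i<length es. ends (es!i) = {vs!i, vs!Suc i}"
  and sub: "set es \<subseteq> F" and clos: "\<forall>e\<in>F. ends e \<inter> set vs \<noteq> {} \<longrightarrow> e \<in> set es"
  and ne: "\<forall>e\<in>F. ends e \<noteq> {}" and v: "v \<in> set vs"
  shows "is_path_on ends F (comp_in ends F v) vs es"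
proof -
  have endsub: "ends e \<subseteq> set vs" if ein: "e \<in> set es" for e
  proof -
    obtain i where i: "i < length es" "es ! i = e" using ein in_set_conv_nth[of e es] by blast
    then show ?thesis using cons len by (auto intro!: nth_mem)
  qed
  have adj_cl: "w \<in> set vs" if adj: "adj_in ends F u w" and uin: "u \<in> set vs" for u w
  proof -
    obtain e where e: "e \<in> F" "ends e = {u,w}" using adj unfolding adj_in_def by blast
    then have "e \<in> set es" using clos uin by auto
    then show ?thesis using endsub e by auto
  qed
  have fw: "(adj_in ends F)\<^sup>*\<^sup>* (vs!0) (vs!i)" if "i < length vs" for i
    using that
  proof (induction i)
    case 0 then show ?case by simp
  next
    case (Suc i)
    then have "i < length es" using len by simp
    then have "es!i \<in> F" using sub nth_mem by blast
    then have "adj_in ends F (vs!i) (vs!Suc i)" using cons \<open>i < length es\<close> unfolding adj_in_def by blast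
    then show ?case using Suc by (auto intro: rtranclp.rtrancl_into_rtrancl)
  qed
  have bw: "(adj_in ends F)\<^sup>*\<^sup>* (vs!i) (vs!0)" if "i < length vs" for i
    using that
  proof (induction i)
    case 0 then show ?case by simp
  next
    case (Suc i)
    then have "i < length es" using len by simp
    then have "es!i \<in> F" using sub nth_mem by blast
    moreover have "ends (es!i) = {vs!Suc i, vs!i}" using cons \<open>i < length es\<close> by (simp add: insert_commute)
    ultimately have "adj_in ends F (vs!Suc i) (vs!i)" unfolding adj_in_def by blast
    then show ?case using Suc by (auto intro: converse_rtranclp_into_rtranclp)
  qed
  have C: "comp_in ends F v = set vs"
  proof
    show "comp_in ends F v \<subseteq> set vs"
    proof
      fix u assume "u \<in> comp_in ends F v"
      then have "(adj_in ends F)\<^sup>*\<^sup>* v u" by (simp add: comp_in_def)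
      then show "u \<in> set vs" by induction (use v adj_cl in auto)
    qed
  next
    show "set vs \<subseteq> comp_in ends F v"
    proof
      fix u assume "u \<in> set vs"
      then obtain i where i: "i < length vs" "vs!i = u" by (auto simp: in_set_conv_nth)
      obtain p where p: "p < length vs" "vs!p = v" using v by (auto simp: in_set_conv_nth)
      show "u \<in> comp_in ends F v" unfolding comp_in_def
        using bw[OF p(1)] fw[OF i(1)] p i by (auto intro: rtranclp_trans)
    qed
  qed
  have S: "set es = {e \<in> F. ends e \<subseteq> set vs}"
  proof (intro equalityI subsetI)
    fix e assume "e \<in> set es" then show "e \<in> {e \<in> F. ends e \<subseteq> set vs}" using sub endsub by blast
  next
    fix e assume e: "e \<in> {e \<in> F. ends e \<subseteq> set vs}"
    then have eF: "e \<in> F" and es: "ends e \<subseteq> set vs" by auto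
    then have "ends e \<noteq> {}" using ne by auto
    then have "ends e \<inter> set vs \<noteq> {}" using es by blast
    then show "e \<in> set es" using clos eF by blast
  qed
  show ?thesis unfolding is_path_on_def C S using dv de len cons by simp
qed

lemma path_pos:
  assumes P: "is_path_on ends F C vs es" and e: "e \<in> F" "ends e \<subseteq> C" "x \<in> ends e"
    and p: "p < length vs" "vs!p = x"
  shows "\<exists>i<length es. es!i = e \<and> (i = p \<or> Suc i = p)"
proof -
  from P have "e \<in> set es" using e by (auto simp: is_path_on_def)
  then obtain i where i: "i < length es" "es!i = e" by (auto simp: in_set_conv_nth)
  then have "x \<in> {vs!i, vs!Suc i}" using P e by (auto simp: is_path_on_def)
  moreover have "distinct vs" "i < length vs" "Suc i < length vs" using P i by (auto simp: is_path_on_def)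
  ultimately have "i = p \<or> Suc i = p" using p by (auto simp: nth_eq_iff_index_eq)
  then show ?thesis using i by blast
qed

lemma three_edges:
  assumes lf: "linear_forest V E ends F" and v: "v \<in> V"
    and F: "a\<in>F" "b\<in>F" "c\<in>F" and d: "a\<noteq>b" "a\<noteq>c" "b\<noteq>c"
    and en: "ends a = {v,x}" "ends b = {v,y}" "ends c = {v,z}"
  shows False
proof -
  obtain vs es where P: "is_path_on ends F (comp_in ends F v) vs es"
    using lf v by (auto simp: linear_forest_def)
  have "v \<in> set vs" using P comp_in_refl by (auto simp: is_path_on_def)
  then obtain p where p: "p < length vs" "vs!p = v" by (auto simp: in_set_conv_nth)
  have sub: "ends a \<subseteq> comp_in ends F v" "ends b \<subseteq> comp_in ends F v" "ends c \<subseteq> comp_in ends F v"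
    using comp_in_refl[of v ends F] comp_in_step F en by (metis insert_subset empty_subsetI)+
  obtain ia where ia: "es!ia = a" "ia = p \<or> Suc ia = p"
    using path_pos[OF P F(1) sub(1) _ p] en by auto
  obtain ib where ib: "es!ib = b" "ib = p \<or> Suc ib = p"
    using path_pos[OF P F(2) sub(2) _ p] en by auto
  obtain ic where ic: "es!ic = c" "ic = p \<or> Suc ic = p"
    using path_pos[OF P F(3) sub(3) _ p] en by auto
  have "ia \<noteq> ib" "ia \<noteq> ic" "ib \<noteq> ic" using ia ib ic d by auto
  then show False using ia ib ic by linarith
qed

lemma parallel:
  assumes lf: "linear_forest V E ends F" and u: "u \<in> V"
    and F: "a\<in>F" "b\<in>F" and d: "a\<noteq>b" and en: "ends a = {u,w}" "ends b = {u,w}" and uw: "u \<noteq> w"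
  shows False
proof -
  obtain vs es where P: "is_path_on ends F (comp_in ends F u) vs es"
    using lf u by (auto simp: linear_forest_def)
  have w: "w \<in> comp_in ends F u" using comp_in_step[OF F(1) en(1) comp_in_refl[of u ends F]] .
  have "u \<in> set vs" "w \<in> set vs" using P comp_in_refl w by (auto simp: is_path_on_def)
  then obtain p q where p: "p < length vs" "vs!p = u" and q: "q < length vs" "vs!q = w"
    by (auto simp: in_set_conv_nth)
  have pq: "p \<noteq> q" using p q uw by auto
  have sub: "ends a \<subseteq> comp_in ends F u" "ends b \<subseteq> comp_in ends F u"
    using comp_in_refl w en by auto
  obtain ia where ia: "es!ia = a" "ia = p \<or> Suc ia = p" "ia < length es"
    using path_pos[OF P F(1) sub(1) _ p] en by blast
  obtain ia' where ia': "es!ia' = a" "ia' = q \<or> Suc ia' = q" "ia' < length es"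
    using path_pos[OF P F(1) sub(1) _ q] en by blast
  obtain ib where ib: "es!ib = b" "ib = p \<or> Suc ib = p" "ib < length es"
    using path_pos[OF P F(2) sub(2) _ p] en by blast
  obtain ib' where ib': "es!ib' = b" "ib' = q \<or> Suc ib' = q" "ib' < length es"
    using path_pos[OF P F(2) sub(2) _ q] en by blast
  have de: "distinct es" using P by (simp add: is_path_on_def)
  have "ia = ia'" using ia ia' de nth_eq_iff_index_eq by metis
  moreover have "ib = ib'" using ib ib' de nth_eq_iff_index_eq by metis
  ultimately have "ia = ib" using ia ia' ib ib' pq by linarith
  then show False using ia ib d by simp
qed

lemma long_path:
  assumes bf: "bounded_linear_forest k V E ends F" and x0: "x 0 \<in> V"
    and g: "\<forall>i\<le>k. g i \<in> F \<and> ends (g i) = {x i, x (Suc i)}" and inj: "inj_on g {..k}"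
  shows False
proof -
  obtain vs es where P: "is_path_on ends F (comp_in ends F (x 0)) vs es" and L: "length es \<le> k"
    using bf x0 by (auto simp: bounded_linear_forest_def)
  have xc: "x i \<in> comp_in ends F (x 0)" if "i \<le> Suc k" for i
    using that
  proof (induction i)
    case 0 show ?case by (rule comp_in_refl)
  next
    case (Suc i)
    then have ik: "i \<le> k" by simp
    then have "g i \<in> F" "ends (g i) = {x i, x (Suc i)}" using g by auto
    moreover have "x i \<in> comp_in ends F (x 0)" using Suc.IH ik by simp
    ultimately show ?case by (rule comp_in_step)
  qed
  have "g ` {..k} \<subseteq> set es"
  proof
    fix e assume "e \<in> g ` {..k}"
    then obtain i where i: "i \<le> k" "e = g i" by auto
    then have "ends e \<subseteq> comp_in ends F (x 0)" using g xc[of i] xc[of "Suc i"] by auto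
    then show "e \<in> set es" using P g i by (auto simp: is_path_on_def)
  qed
  then have "card (g ` {..k}) \<le> card (set es)" by (simp add: card_mono)
  also have "\<dots> \<le> length es" by (rule card_length)
  finally show False using card_image[OF inj] L by simp
qed



lemma sf_single_iff: "sf_single (k + 1) k i \<longleftrightarrow> i = k"
  unfolding sf_single_def by auto

lemma pf_V_iff: "v \<in> pf_V k \<longleftrightarrow> (\<exists>j. v = PV j \<and> j < k) \<or> (\<exists>j c i. v = FV j c i \<and> j < k - 1 \<and> i < k + 1)"
  unfolding pf_V_def by auto

lemma pf_E_iff: "e \<in> pf_E k \<longleftrightarrow> (\<exists>j. e = PE j \<and> j < k - 1) \<or>
   (\<exists>j c i m. e = FE j c i m \<and> j < k - 1 \<and> i < k + 1 \<and> (m \<longrightarrow> i \<noteq> k))"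
  unfolding pf_E_def using sf_single_iff by auto

lemma part2:
  assumes k: "k \<ge> 2" and D: "inf_k_decomp k (pf_V k) (pf_E k) (pf_ends k) Finf Fk"
  shows "degree_in (pf_ends k) Finf (pf_tip k) = 0 \<and> (\<forall>j < k - 1. PE j \<in> Fk)"
proof -
  have U: "Finf \<union> Fk = pf_E k" and dj: "Finf \<inter> Fk = {}"
    and lf: "linear_forest (pf_V k) (pf_E k) (pf_ends k) Finf"
    and bf: "bounded_linear_forest k (pf_V k) (pf_E k) (pf_ends k) Fk"
    using D by (auto simp: inf_k_decomp_def)
  have PE: "PE j \<in> Fk" if j: "j < k - 1" for j
  proof -
    have side: "FE j c k False \<in> Finf" for c
    proof -
      have one: "FE j c i False \<in> Fk \<or> FE j c i True \<in> Fk" if i: "i < k" for i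
      proof (rule ccontr)
        assume "\<not> ?thesis"
        moreover have "FE j c i False \<in> pf_E k" "FE j c i True \<in> pf_E k"
          using i j by (auto simp: pf_E_iff)
        ultimately have "FE j c i False \<in> Finf" "FE j c i True \<in> Finf" using U by auto
        moreover have "FV j c i \<in> pf_V k" using i j by (auto simp: pf_V_iff)
        ultimately show False
          using parallel[OF lf, of "FV j c i" "FE j c i False" "FE j c i True" "FV j c (Suc i)"] i
          by (auto simp: pf_fvert_def)
      qed
      show ?thesis
      proof (rule ccontr)
        assume nf: "FE j c k False \<notin> Finf"
        have "FE j c k False \<in> pf_E k" using j by (auto simp: pf_E_iff)
        then have fk: "FE j c k False \<in> Fk" using nf U by auto
        define g where "g i = (if i = k then FE j c k False
             else if FE j c i True \<in> Fk then FE j c i True else FE j c i False)" for i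
        show False
        proof (rule long_path[OF bf, of "pf_fvert k j c" g])
          show "pf_fvert k j c 0 \<in> pf_V k" using j by (auto simp: pf_fvert_def pf_V_iff)
          show "\<forall>i\<le>k. g i \<in> Fk \<and> pf_ends k (g i) = {pf_fvert k j c i, pf_fvert k j c (Suc i)}"
          proof (intro allI impI)
            fix i assume "i \<le> k"
            then show "g i \<in> Fk \<and> pf_ends k (g i) = {pf_fvert k j c i, pf_fvert k j c (Suc i)}"
              using one[of i] fk by (cases "i = k") (auto simp: g_def)
          qed
          show "inj_on g {..k}" unfolding inj_on_def g_def by auto
        qed
      qed
    qed
    show ?thesis
    proof (rule ccontr)
      assume "PE j \<notin> Fk"
      moreover have "PE j \<in> pf_E k" using j by (auto simp: pf_E_iff)
      ultimately have "PE j \<in> Finf" using U by auto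
      moreover have "PV j \<in> pf_V k" using j by (auto simp: pf_V_iff)
      ultimately show False
        using three_edges[OF lf, of "PV j" "FE j False k False" "FE j True k False" "PE j"
            "FV j False k" "FV j True k" "PV (Suc j)"] side
        by (auto simp: pf_fvert_def)
    qed
  qed
  have E0: "{e \<in> Finf. pf_tip k \<in> pf_ends k e} = {}"
  proof (rule ccontr)
    assume "\<not> ?thesis"
    then obtain e where e: "e \<in> Finf" "pf_tip k \<in> pf_ends k e" by auto
    then have eE: "e \<in> pf_E k" using U by auto
    have "\<not> (\<exists>j. e = PE j \<and> j < k - 1)"
    proof
      assume "\<exists>j. e = PE j \<and> j < k - 1"
      then obtain j where j: "e = PE j" "j < k - 1" by blast
      then have "Suc j = k - 1" using e k by (auto simp: pf_tip_def)
      then have "PE j \<in> Fk" using PE j by auto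
      then show False using e j dj by auto
    qed
    moreover have "\<not> (\<exists>j c i m. e = FE j c i m \<and> j < k - 1 \<and> i < k + 1 \<and> (m \<longrightarrow> i \<noteq> k))"
      using e k by (auto simp: pf_tip_def pf_fvert_def split: if_splits)
    ultimately show False using eE unfolding pf_E_iff by blast
  qed
  show ?thesis using PE unfolding degree_in_def E0 by simp
qed



definition fk_set :: "nat \<Rightarrow> pf_edge set" where
  "fk_set k = {PE j | j. j < k - 1} \<union> {FE j c i True | j c i. j < k - 1 \<and> i < k}"
definition finf_set :: "nat \<Rightarrow> pf_edge set" where
  "finf_set k = {FE j c i False | j c i. j < k - 1 \<and> i \<le> k}"
definition cf :: "nat \<Rightarrow> nat \<Rightarrow> nat \<Rightarrow> pf_vert" where
  "cf k j n = (if n \<le> k then FV j False n else if n = k + 1 then PV j else FV j True (2*k+2-n))"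
definition ce :: "nat \<Rightarrow> nat \<Rightarrow> nat \<Rightarrow> pf_edge" where
  "ce k j n = (if n \<le> k then FE j False n False else FE j True (2*k+1-n) False)"

lemma ends_ne: "pf_ends k e \<noteq> {}" by (cases e) auto

lemma fk_comp_PV:
  assumes k: "k \<ge> 2" and v: "v \<in> set (map PV [0..<k])"
  shows "is_path_on (pf_ends k) (fk_set k) (comp_in (pf_ends k) (fk_set k) v) (map PV [0..<k]) (map PE [0..<k-1])"
proof (rule comp_in_path)
  show "\<forall>e\<in>fk_set k. pf_ends k e \<inter> set (map PV [0..<k]) \<noteq> {} \<longrightarrow> e \<in> set (map PE [0..<k - 1])"
    by (auto simp: fk_set_def pf_fvert_def)
qed (use k v ends_ne in \<open>auto simp: fk_set_def distinct_map inj_on_def nth_append\<close>)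

lemma fk_comp_FV:
  assumes k: "k \<ge> 2" and j: "j < k - 1" and v: "v \<in> set (map (FV j c) [0..<k+1])"
  shows "is_path_on (pf_ends k) (fk_set k) (comp_in (pf_ends k) (fk_set k) v) (map (FV j c) [0..<k+1]) (map (\<lambda>i. FE j c i True) [0..<k])"
proof (rule comp_in_path)
  show "\<forall>e\<in>fk_set k. pf_ends k e \<inter> set (map (FV j c) [0..<k+1]) \<noteq> {} \<longrightarrow> e \<in> set (map (\<lambda>i. FE j c i True) [0..<k])"
    by (auto simp: fk_set_def pf_fvert_def)
qed (use k j v ends_ne in \<open>auto simp del: upt_Suc simp: fk_set_def distinct_map inj_on_def pf_fvert_def\<close>)

lemma cf_set: "set (map (cf k j) [0..<2*k+3]) = {PV j} \<union> {FV j c i | c i. i \<le> k}"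
proof -
  have "cf k j ` {0..<2*k+3} = {PV j} \<union> {FV j c i | c i. i \<le> k}"
  proof
    show "cf k j ` {0..<2*k+3} \<subseteq> {PV j} \<union> {FV j c i | c i. i \<le> k}"
      by (auto simp: cf_def)
  next
    show "{PV j} \<union> {FV j c i | c i. i \<le> k} \<subseteq> cf k j ` {0..<2*k+3}"
    proof
      fix v assume "v \<in> {PV j} \<union> {FV j c i | c i. i \<le> k}"
      then consider "v = PV j" | i where "v = FV j False i" "i \<le> k" | i where "v = FV j True i" "i \<le> k"
        by blast
      then show "v \<in> cf k j ` {0..<2*k+3}"
      proof cases
        case 1 then show ?thesis by (intro image_eqI[of _ _ "k+1"]) (auto simp: cf_def)
      next
        case 2 then show ?thesis by (intro image_eqI[of _ _ i]) (auto simp: cf_def)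
      next
        case 3 then show ?thesis by (intro image_eqI[of _ _ "2*k+2-i"]) (auto simp: cf_def)
      qed
    qed
  qed
  then show ?thesis by simp
qed

lemma finf_comp:
  assumes k: "k \<ge> 2" and j: "j < k - 1" and v: "v \<in> set (map (cf k j) [0..<2*k+3])"
  shows "is_path_on (pf_ends k) (finf_set k) (comp_in (pf_ends k) (finf_set k) v) (map (cf k j) [0..<2*k+3]) (map (ce k j) [0..<2*k+2])"
proof (rule comp_in_path)
  show "distinct (map (cf k j) [0..<2*k+3])"
    by (auto simp: distinct_map inj_on_def cf_def split: if_splits)
  show "distinct (map (ce k j) [0..<2*k+2])"
    by (auto simp: distinct_map inj_on_def ce_def split: if_splits)
  show "\<forall>i<length (map (ce k j) [0..<2*k+2]). pf_ends k (map (ce k j) [0..<2*k+2] ! i) =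
     {map (cf k j) [0..<2*k+3] ! i, map (cf k j) [0..<2*k+3] ! Suc i}"
  proof (intro allI impI)
    fix i assume "i < length (map (ce k j) [0..<2*k+2])"
    then have i: "i < 2*k+2" by simp
    have a: "map (ce k j) [0..<2*k+2] ! i = ce k j i" using i by (simp del: upt_Suc)
    have b: "map (cf k j) [0..<2*k+3] ! i = cf k j i" "map (cf k j) [0..<2*k+3] ! Suc i = cf k j (Suc i)"
      using i by (simp_all del: upt_Suc)
    consider "i < k" | "i = k" | "i = k + 1" | "k + 1 < i" by linarith
    then have c: "pf_ends k (ce k j i) = {cf k j i, cf k j (Suc i)}"
    proof cases
      case 4
      then have "2*k+2 - i = Suc (2*k+1-i)" "2*k+2 - Suc i = 2*k+1-i" "2*k+1-i < k" using i by auto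
      moreover have "ce k j i = FE j True (2*k+1-i) False" "cf k j i = FV j True (2*k+2-i)"
        "cf k j (Suc i) = FV j True (2*k+1-i)" using 4 i by (auto simp: ce_def cf_def)
      ultimately show ?thesis using 4 i by (simp add: pf_fvert_def insert_commute)
    qed (auto simp: ce_def cf_def pf_fvert_def insert_commute)
    show "pf_ends k (map (ce k j) [0..<2*k+2] ! i) =
     {map (cf k j) [0..<2*k+3] ! i, map (cf k j) [0..<2*k+3] ! Suc i}"
      unfolding a b by (rule c)
  qed
  show "set (map (ce k j) [0..<2*k+2]) \<subseteq> finf_set k"
    using j by (auto simp: ce_def finf_set_def)
  show "\<forall>e\<in>finf_set k. pf_ends k e \<inter> set (map (cf k j) [0..<2*k+3]) \<noteq> {} \<longrightarrow> e \<in> set (map (ce k j) [0..<2*k+2])"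
  proof (intro ballI impI)
    fix e assume e: "e \<in> finf_set k" "pf_ends k e \<inter> set (map (cf k j) [0..<2*k+3]) \<noteq> {}"
    then obtain j' c i where e': "e = FE j' c i False" "i \<le> k" by (auto simp: finf_set_def)
    have "j' = j" using e e' unfolding cf_set by (auto simp: pf_fvert_def split: if_splits)
    show "e \<in> set (map (ce k j) [0..<2*k+2])"
    proof (cases c)
      case True
      then show ?thesis using e' \<open>j' = j\<close> by (auto intro!: image_eqI[of _ _ "2*k+1-i"] simp: ce_def)
    next
      case False
      then show ?thesis using e' \<open>j' = j\<close> by (auto intro!: image_eqI[of _ _ i] simp: ce_def)
    qed
  qed
qed (use v ends_ne in auto)

lemma iso_comp:
  assumes k: "k \<ge> 2"
  shows "is_path_on (pf_ends k) (finf_set k) (comp_in (pf_ends k) (finf_set k) (PV (k-1))) [PV (k-1)] []"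
  by (rule comp_in_path) (use k ends_ne in \<open>auto simp: finf_set_def pf_fvert_def split: if_splits\<close>)

lemma part1:
  assumes k: "k \<ge> 2"
  shows "inf_k_decomp k (pf_V k) (pf_E k) (pf_ends k) (finf_set k) (fk_set k)"
  unfolding inf_k_decomp_def
proof (intro conjI)
  show "finf_set k \<union> fk_set k = pf_E k"
  proof
    show "finf_set k \<union> fk_set k \<subseteq> pf_E k"
      by (auto simp: finf_set_def fk_set_def pf_E_iff)
    show "pf_E k \<subseteq> finf_set k \<union> fk_set k"
    proof
      fix e assume "e \<in> pf_E k"
      then consider j where "e = PE j" "j < k - 1" | j c i m where "e = FE j c i m" "j < k - 1" "i < k + 1" "m \<longrightarrow> i \<noteq> k"
        unfolding pf_E_iff by blast
      then show "e \<in> finf_set k \<union> fk_set k"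
      proof cases
        case 1 then show ?thesis by (auto simp: fk_set_def)
      next
        case (2 j c i m) then show ?thesis
          by (cases m) (auto simp: fk_set_def finf_set_def)
      qed
    qed
  qed
  show "finf_set k \<inter> fk_set k = {}" by (auto simp: finf_set_def fk_set_def)
  show "linear_forest (pf_V k) (pf_E k) (pf_ends k) (finf_set k)"
    unfolding linear_forest_def
  proof (intro conjI ballI)
    show "finf_set k \<subseteq> pf_E k" by (auto simp: finf_set_def pf_E_iff)
    fix v assume "v \<in> pf_V k"
    then consider (a) j where "v = PV j" "j < k - 1" | (b) "v = PV (k-1)"
      | (c) j c i where "v = FV j c i" "j < k - 1" "i < k + 1"
      unfolding pf_V_iff by (metis less_antisym Suc_pred' less_nat_zero_code neq0_conv)
    then show "\<exists>vs es. is_path_on (pf_ends k) (finf_set k) (comp_in (pf_ends k) (finf_set k) v) vs es"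
    proof cases
      case a then show ?thesis using finf_comp[OF k a(2), of v] cf_set by blast
    next
      case b then show ?thesis using iso_comp[OF k] by blast
    next
      case c then show ?thesis using finf_comp[OF k c(2), of v] cf_set by auto
    qed
  qed
  show "bounded_linear_forest k (pf_V k) (pf_E k) (pf_ends k) (fk_set k)"
    unfolding bounded_linear_forest_def
  proof (intro conjI ballI)
    show "fk_set k \<subseteq> pf_E k" by (auto simp: fk_set_def pf_E_iff)
    fix v assume "v \<in> pf_V k"
    then consider (a) j where "v = PV j" "j < k" 
      | (c) j c i where "v = FV j c i" "j < k - 1" "i < k + 1"
      unfolding pf_V_iff by blast
    then show "\<exists>vs es. is_path_on (pf_ends k) (fk_set k) (comp_in (pf_ends k) (fk_set k) v) vs es \<and> length es \<le> k"
    proof cases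
      case a then show ?thesis using fk_comp_PV[OF k, of v] by force
    next
      case c then show ?thesis using fk_comp_FV[OF k c(2), of v c] by force
    qed
  qed
qed


theorem proposition13:
  fixes k :: nat
  assumes "k \<ge> 2"
  shows "(\<exists>Finf Fk. inf_k_decomp k (pf_V k) (pf_E k) (pf_ends k) Finf Fk) \<and>
         (\<forall>Finf Fk. inf_k_decomp k (pf_V k) (pf_E k) (pf_ends k) Finf Fk \<longrightarrow>
            degree_in (pf_ends k) Finf (pf_tip k) = 0 \<and>
            (\<forall>j < k - 1. PE j \<in> Fk))"
  using part1[OF assms] part2[OF assms] by blast

end
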